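(* Let $W_T=S_{N+1}$ be the symmetric group with simple reflections $s_1,\dots,s_N$ indexed by $T=\{1<2<\dots<N\}$, let $I=\{1,\dots,N-1\}$, $J=\{2,\dots,N\}$, and for $X\subset T$ with $X=\{x_1>x_2>\dots>x_d\}$ let $h_X=s_{x_1}s_{x_2}\cdots s_{x_d}$. For any subset $X\subset T$ the following are equivalent: (i) $J\subset X$; (ii) $J\subset\mathcal R(w_Ih_X)$. Moreover, in this case: (1) $\ell(w_Ih_X)=\ell(w_I)+\ell(h_X)$; (2) $w_Ih_X=h_Yw_J$ for some uniquely determined $Y\subset T$; (3) $Y$ is the conjugation of $X$ by the longest element of $W_T$; (4) $\mathcal R(w_Ih_X)=X$; (5) $\mathcal L(h_Yw_J)=Y$.
   Context: For $K\subset T$, $w_K$ is the longest element of the parabolic subgroup $W_K$. $\mathcal L(w)$ and $\mathcal R(w)$ denote the left and right descent sets of $w$ (sets of simple reflections, identified with their indices). Conjugation by the longest element $w_T$ sends $s_i$ to $s_{N+1-i}$. *)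

theory Defs
  imports "HOL-Combinatorics.Transposition"
begin

text \<open>Elements of the symmetric group S_(N+1) are modelled as permutations
  of the naturals acting on {1..N+1} (fixing everything else).  The product
  u v of group elements is function composition u \<circ> v.\<close>

definition sref :: "nat \<Rightarrow> nat \<Rightarrow> nat" where
  "sref i = transpose i (Suc i)"

definition word_prod :: "nat list \<Rightarrow> nat \<Rightarrow> nat" where
  "word_prod ws = foldr (\<lambda>i acc. sref i \<circ> acc) ws id"

definition parab :: "nat set \<Rightarrow> (nat \<Rightarrow> nat) set" where
  "parab K = {word_prod ws | ws. set ws \<subseteq> K}"

definition len :: "nat \<Rightarrow> (nat \<Rightarrow> nat) \<Rightarrow> nat" where
  "len N w = (LEAST k. \<exists>ws. set ws \<subseteq> {1..N} \<and> length ws = k \<and> word_prod ws = w)"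

definition rdes :: "nat \<Rightarrow> (nat \<Rightarrow> nat) \<Rightarrow> nat set" where
  "rdes N w = {i \<in> {1..N}. len N (w \<circ> sref i) < len N w}"

definition ldes :: "nat \<Rightarrow> (nat \<Rightarrow> nat) \<Rightarrow> nat set" where
  "ldes N w = {i \<in> {1..N}. len N (sref i \<circ> w) < len N w}"

definition longest :: "nat \<Rightarrow> nat set \<Rightarrow> nat \<Rightarrow> nat" where
  "longest N K = (SOME w. w \<in> parab K \<and> (\<forall>v \<in> parab K. len N v \<le> len N w))"

definition hprod :: "nat set \<Rightarrow> nat \<Rightarrow> nat" where
  "hprod X = word_prod (rev (sorted_list_of_set X))"

definition conj_longest :: "nat \<Rightarrow> nat set \<Rightarrow> nat set" where
  "conj_longest N X = {j \<in> {1..N}. \<exists>x \<in> X.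
      sref j = longest N {1..N} \<circ> sref x \<circ> inv (longest N {1..N})}"

end

theory Submission
  imports Defs
begin

lemma sref_apply: "sref i x = (if x = i then Suc i else if x = Suc i then i else x)"
  by (simp add: sref_def transpose_def)

lemma sref_sref[simp]: "sref i \<circ> sref i = id"
  by (simp add: sref_def)

lemma sref_sref'[simp]: "sref i (sref i x) = x"
  by (simp add: sref_apply)

lemma wp_Nil[simp]: "word_prod [] = id" by (simp add: word_prod_def)
lemma wp_Cons[simp]: "word_prod (i#ws) = sref i \<circ> word_prod ws" by (simp add: word_prod_def)
lemma wp_append: "word_prod (xs@ys) = word_prod xs \<circ> word_prod ys"
  by (induction xs) (auto simp: comp_assoc)

lemma wp_rev_inv: "word_prod (rev ws) \<circ> word_prod ws = id"
proof (induction ws)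
  case (Cons i ws)
  have "word_prod (rev (i#ws)) \<circ> word_prod (i#ws) = word_prod (rev ws) \<circ> (sref i \<circ> sref i) \<circ> word_prod ws"
    by (simp add: wp_append fun_eq_iff)
  then show ?case using Cons by (auto simp: fun_eq_iff wp_append)
qed simp

lemma wp_inv_rev: "word_prod ws \<circ> word_prod (rev ws) = id"
  using wp_rev_inv[of "rev ws"] by simp

lemma inj_wp: "inj (word_prod ws)"
  by (metis inj_on_id inj_on_imageI2 wp_rev_inv)

lemma wp_support:
  assumes "set ws \<subseteq> {a..b}"
  shows "(k < a \<or> Suc b < k \<longrightarrow> word_prod ws k = k) \<and>
         (a \<le> k \<and> k \<le> Suc b \<longrightarrow> a \<le> word_prod ws k \<and> word_prod ws k \<le> Suc b)"
  using assms
proof (induction ws arbitrary: k)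
  case (Cons i ws)
  then have i: "a \<le> i" "i \<le> b" by auto
  from Cons show ?case using i by (auto simp: sref_apply)
qed simp

definition invset :: "nat \<Rightarrow> (nat \<Rightarrow> nat) \<Rightarrow> (nat \<times> nat) set" where
  "invset N w = {(a,b). a < b \<and> b \<le> Suc N \<and> w b < w a}"

definition ninv :: "nat \<Rightarrow> (nat \<Rightarrow> nat) \<Rightarrow> nat" where
  "ninv N w = card (invset N w)"

lemma finite_invset[simp]: "finite (invset N w)"
  by (rule finite_subset[of _ "{..Suc N} \<times> {..Suc N}"]) (auto simp: invset_def)

lemma invset_half:
  assumes "i \<le> N"
  shows "card (invset N w - {(i, Suc i)}) \<le> card (invset N (w \<circ> sref i) - {(i, Suc i)})"
proof -
  let ?phi = "\<lambda>(a,b). (sref i a, sref i b)"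
  have inj: "inj ?phi" by (rule injI) (auto, metis sref_sref', metis sref_sref')
  have sub: "?phi ` (invset N w - {(i, Suc i)}) \<subseteq> invset N (w \<circ> sref i) - {(i, Suc i)}"
    using assms by (auto simp: invset_def sref_apply split: if_splits)
  have "card (invset N w - {(i, Suc i)}) = card (?phi ` (invset N w - {(i, Suc i)}))"
    using inj by (simp add: card_image inj_on_subset)
  also have "\<dots> \<le> card (invset N (w \<circ> sref i) - {(i, Suc i)})"
    by (rule card_mono[OF _ sub]) simp
  finally show ?thesis .
qed

lemma invset_minus_eq:
  assumes "i \<le> N"
  shows "card (invset N w - {(i, Suc i)}) = card (invset N (w \<circ> sref i) - {(i, Suc i)})"
  using invset_half[OF assms, of w] invset_half[OF assms, of "w \<circ> sref i"]
  by (simp add: comp_assoc)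

lemma ninv_up:
  assumes "i \<le> N" "w i < w (Suc i)"
  shows "ninv N (w \<circ> sref i) = Suc (ninv N w)"
proof -
  have p1: "(i, Suc i) \<in> invset N (w \<circ> sref i)" using assms by (simp add: invset_def sref_apply)
  have p2: "(i, Suc i) \<notin> invset N w" using assms by (simp add: invset_def)
  have "card (invset N (w \<circ> sref i)) > 0"
    using p1 by (auto simp: card_gt_0_iff)
  then show ?thesis using invset_minus_eq[OF assms(1), of w] p1 p2
    unfolding ninv_def by (simp add: card_Diff_singleton)
qed

lemma ninv_down:
  assumes "i \<le> N" "w (Suc i) < w i"
  shows "Suc (ninv N (w \<circ> sref i)) = ninv N w"
proof -
  have p1: "(i, Suc i) \<notin> invset N (w \<circ> sref i)" using assms by (simp add: invset_def sref_apply)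
  have p2: "(i, Suc i) \<in> invset N w" using assms by (simp add: invset_def)
  have "card (invset N w) > 0"
    using p2 by (auto simp: card_gt_0_iff)
  then show ?thesis using invset_minus_eq[OF assms(1), of w] p1 p2
    unfolding ninv_def by (simp add: card_Diff_singleton)
qed

lemma ninv_le:
  assumes "i \<le> N"
  shows "ninv N (w \<circ> sref i) \<le> Suc (ninv N w)"
proof -
  have "card (invset N (w \<circ> sref i)) \<le> Suc (card (invset N (w \<circ> sref i) - {(i, Suc i)}))"
    by (metis card_Diff1_le card_Diff_singleton_if finite_invset le_SucI Suc_pred' card_gt_0_iff le_refl empty_iff not_le)
  also have "\<dots> = Suc (card (invset N w - {(i, Suc i)}))" using invset_minus_eq[OF assms] by simp
  also have "\<dots> \<le> Suc (card (invset N w))" by (simp add: card_Diff1_le)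
  finally show ?thesis by (simp add: ninv_def)
qed

lemma ninv_wp_le: "set ws \<subseteq> {1..N} \<Longrightarrow> ninv N (word_prod ws) \<le> length ws"
proof (induction ws rule: rev_induct)
  case Nil
  have "invset N (\<lambda>a. a) = {}" by (auto simp: invset_def)
  then show ?case by (simp add: ninv_def id_def)
next
  case (snoc i ws)
  then have "ninv N (word_prod ws \<circ> sref i) \<le> Suc (ninv N (word_prod ws))"
    by (intro ninv_le) auto
  moreover have eq: "word_prod (ws@[i]) = word_prod ws \<circ> sref i" by (simp add: wp_append)
  moreover have "ninv N (word_prod ws) \<le> length ws" using snoc by auto
  ultimately show ?case by (simp only: eq length_append_singleton)
qed

lemma mono_step:
  assumes "\<And>i. a \<le> i \<Longrightarrow> i \<le> b \<Longrightarrow> w i < w (Suc i)" "a \<le> k"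
  shows "k + m \<le> Suc b \<Longrightarrow> w k + m \<le> w (k + m)"
proof (induction m)
  case (Suc m)
  then have "w k + m \<le> w (k+m)" by simp
  moreover have "w (k+m) < w (Suc (k+m))" using assms Suc.prems by simp
  ultimately show ?case by simp
qed simp

lemma anti_step:
  assumes "\<And>i. a \<le> i \<Longrightarrow> i \<le> b \<Longrightarrow> w (Suc i) < w i" "a \<le> k"
  shows "k + m \<le> Suc b \<Longrightarrow> w (k + m) + m \<le> w k"
proof (induction m)
  case (Suc m)
  then have "w (k+m) + m \<le> w k" by simp
  moreover have "w (Suc (k+m)) < w (k+m)" using assms Suc.prems by simp
  ultimately show ?case by simp
qed simp

definition supp_ok :: "nat \<Rightarrow> nat \<Rightarrow> (nat \<Rightarrow> nat) \<Rightarrow> bool" where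
  "supp_ok a b w \<longleftrightarrow> inj w \<and> (\<forall>k. k < a \<or> Suc b < k \<longrightarrow> w k = k) \<and>
      (\<forall>k. a \<le> k \<and> k \<le> Suc b \<longrightarrow> a \<le> w k \<and> w k \<le> Suc b)"

lemma nodesc_id:
  assumes "supp_ok a b w" "\<And>i. a \<le> i \<Longrightarrow> i \<le> b \<Longrightarrow> w i < w (Suc i)"
  shows "w = id"
proof
  fix k
  show "w k = id k"
  proof (cases "a \<le> k \<and> k \<le> Suc b")
    case True
    have "w a + (k - a) \<le> w (a + (k - a))" using True by (intro mono_step[of a b w, OF assms(2)]) auto
    moreover have "w k + (Suc b - k) \<le> w (k + (Suc b - k))" using True by (intro mono_step[of a b w, OF assms(2)]) auto
    moreover have "a + (k - a) = k" "k + (Suc b - k) = Suc b" using True by auto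
    moreover have "a \<le> w a" "w (Suc b) \<le> Suc b" using True assms(1) unfolding supp_ok_def by auto
    ultimately show ?thesis by simp
  next
    case False
    then show ?thesis using assms(1) unfolding supp_ok_def by auto
  qed
qed

lemma inj_sref: "inj (sref i)"
  by (simp add: sref_def inj_transpose)

lemma supp_ok_comp:
  assumes "supp_ok a b w" "a \<le> i" "i \<le> b"
  shows "supp_ok a b (w \<circ> sref i)"
  using assms unfolding supp_ok_def
  by (auto simp: inj_compose inj_sref sref_apply)

lemma gen_aux:
  assumes "b \<le> N"
  shows "\<forall>w. supp_ok a b w \<longrightarrow> ninv N w = n \<longrightarrow>
     (\<exists>ws. set ws \<subseteq> {a..b} \<and> length ws = ninv N w \<and> word_prod ws = w)"
proof (induction n)
  case 0
  show ?case
  proof (intro allI impI)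
    fix w assume s: "supp_ok a b w" and z: "ninv N w = 0"
    have "w i < w (Suc i)" if "a \<le> i" "i \<le> b" for i
    proof (rule ccontr)
      assume "\<not> w i < w (Suc i)"
      moreover have "w i \<noteq> w (Suc i)" using s unfolding supp_ok_def by (metis injD n_not_Suc_n)
      ultimately have "(i, Suc i) \<in> invset N w" using that assms by (auto simp: invset_def)
      then have "ninv N w > 0" by (auto simp: ninv_def card_gt_0_iff)
      then show False using z by simp
    qed
    then have "w = id" by (intro nodesc_id[OF s]) auto
    then show "\<exists>ws. set ws \<subseteq> {a..b} \<and> length ws = ninv N w \<and> word_prod ws = w"
      using z by (intro exI[of _ "[]"]) auto
  qed
next
  case (Suc n)
  show ?case
  proof (intro allI impI)
    fix w assume s: "supp_ok a b w" and z: "ninv N w = Suc n"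
    have "\<exists>i. a \<le> i \<and> i \<le> b \<and> w (Suc i) < w i"
    proof (rule ccontr)
      assume nd: "\<not> ?thesis"
      have "w i < w (Suc i)" if "a \<le> i" "i \<le> b" for i
      proof -
        have "w i \<noteq> w (Suc i)" using s unfolding supp_ok_def by (metis injD n_not_Suc_n)
        then show ?thesis using nd that by auto
      qed
      then have "w = id" by (intro nodesc_id[OF s]) auto
      moreover have "invset N (\<lambda>a. a) = {}" by (auto simp: invset_def)
      ultimately show False using z by (simp add: ninv_def id_def)
    qed
    then obtain i where i: "a \<le> i" "i \<le> b" "w (Suc i) < w i" by blast
    have d: "Suc (ninv N (w \<circ> sref i)) = ninv N w" using ninv_down[of i N w] i assms by simp
    have s': "supp_ok a b (w \<circ> sref i)" using supp_ok_comp[OF s i(1,2)] .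
    obtain ws where ws: "set ws \<subseteq> {a..b}" "length ws = ninv N (w \<circ> sref i)"
        "word_prod ws = w \<circ> sref i"
      using Suc.IH s' d z by force
    have "word_prod (ws @ [i]) = w" using ws(3) by (simp add: wp_append fun_eq_iff)
    then show "\<exists>ws. set ws \<subseteq> {a..b} \<and> length ws = ninv N w \<and> word_prod ws = w"
      using ws i d by (intro exI[of _ "ws @ [i]"]) auto
  qed
qed

lemma gen:
  assumes "b \<le> N" "supp_ok a b w"
  shows "\<exists>ws. set ws \<subseteq> {a..b} \<and> length ws = ninv N w \<and> word_prod ws = w"
  using gen_aux[OF assms(1), where n="ninv N w" and a=a] assms(2) by blast

definition wpT :: "nat \<Rightarrow> (nat \<Rightarrow> nat) \<Rightarrow> bool" where
  "wpT N w \<longleftrightarrow> (\<exists>ws. set ws \<subseteq> {1..N} \<and> word_prod ws = w)"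

lemma supp_ok_wp: "set ws \<subseteq> {a..b} \<Longrightarrow> supp_ok a b (word_prod ws)"
  using wp_support[of ws a b] inj_wp[of ws] unfolding supp_ok_def by blast

lemma len_eq:
  assumes "wpT N w"
  shows "len N w = ninv N w"
proof -
  obtain ws where ws: "set ws \<subseteq> {1..N}" "word_prod ws = w" using assms wpT_def by auto
  obtain vs where vs: "set vs \<subseteq> {1..N}" "length vs = ninv N w" "word_prod vs = w"
    using gen[of N N 1 w] supp_ok_wp[OF ws(1)] ws(2) by auto
  show ?thesis unfolding len_def
  proof (rule Least_equality)
    show "\<exists>ws. set ws \<subseteq> {1..N} \<and> length ws = ninv N w \<and> word_prod ws = w" using vs by blast
  next
    fix k assume "\<exists>ws. set ws \<subseteq> {1..N} \<and> length ws = k \<and> word_prod ws = w"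
    then obtain us where "set us \<subseteq> {1..N}" "length us = k" "word_prod us = w" by blast
    then show "ninv N w \<le> k" using ninv_wp_le[of us N] by simp
  qed
qed

lemma wpT_comp: "wpT N u \<Longrightarrow> wpT N v \<Longrightarrow> wpT N (u \<circ> v)"
  unfolding wpT_def by (metis set_append Un_least wp_append)

lemma wpT_sref: "1 \<le> i \<Longrightarrow> i \<le> N \<Longrightarrow> wpT N (sref i)"
  unfolding wpT_def by (intro exI[of _ "[i]"]) auto

lemma wpT_inj: "wpT N w \<Longrightarrow> inj w"
  unfolding wpT_def using inj_wp by blast

lemma rdes_char:
  assumes "wpT N w"
  shows "rdes N w = {i \<in> {1..N}. w (Suc i) < w i}"
proof -
  have "len N (w \<circ> sref i) < len N w \<longleftrightarrow> w (Suc i) < w i" if i: "1 \<le> i" "i \<le> N" for i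
  proof -
    have w2: "wpT N (w \<circ> sref i)" using wpT_comp[OF assms wpT_sref[OF i]] .
    have "w i \<noteq> w (Suc i)" using wpT_inj[OF assms] by (metis injD n_not_Suc_n)
    then consider "w (Suc i) < w i" | "w i < w (Suc i)" by linarith
    then show ?thesis
    proof cases
      case 1
      then show ?thesis using ninv_down[of i N w] i len_eq[OF assms] len_eq[OF w2] by simp
    next
      case 2
      then show ?thesis using ninv_up[of i N w] i len_eq[OF assms] len_eq[OF w2] by simp
    qed
  qed
  then show ?thesis unfolding rdes_def by auto
qed

lemma len_rev_le:
  assumes "set ws \<subseteq> {1..N}"
  shows "len N (word_prod (rev ws)) \<le> len N (word_prod ws)"
proof -
  let ?w = "word_prod ws" and ?g = "word_prod (rev ws)"
  have wT: "wpT N ?w" "wpT N ?g" using assms unfolding wpT_def by (metis set_rev)+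
  obtain us where us: "set us \<subseteq> {1..N}" "length us = ninv N ?w" "word_prod us = ?w"
    using gen[of N N 1 ?w] supp_ok_wp[OF assms] by auto
  have "word_prod (rev us) = word_prod (rev us) \<circ> (?w \<circ> ?g)" by (simp add: wp_inv_rev)
  also have "\<dots> = (word_prod (rev us) \<circ> word_prod us) \<circ> ?g" using us(3) by (simp add: comp_assoc)
  also have "\<dots> = ?g" by (simp add: wp_rev_inv)
  finally have g: "word_prod (rev us) = ?g" .
  have "len N ?g = ninv N ?g" using len_eq[OF wT(2)] .
  also have "\<dots> \<le> length (rev us)" using ninv_wp_le[of "rev us" N] us(1) g by simp
  also have "\<dots> = len N ?w" using us(2) len_eq[OF wT(1)] by simp
  finally show ?thesis .
qed

lemma ldes_char:
  assumes "set ws \<subseteq> {1..N}" "word_prod ws \<circ> e = id"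
  shows "ldes N (word_prod ws) = {i \<in> {1..N}. e (Suc i) < e i}"
proof -
  let ?w = "word_prod ws" and ?g = "word_prod (rev ws)"
  have ge: "?g = e"
  proof -
    have "?g = ?g \<circ> (?w \<circ> e)" using assms(2) by simp
    also have "\<dots> = e" by (simp add: comp_assoc[symmetric] wp_rev_inv)
    finally show ?thesis .
  qed
  have lw: "len N ?w = len N ?g"
    using len_rev_le[OF assms(1)] len_rev_le[of "rev ws" N] assms(1) by simp
  have "len N (sref i \<circ> ?w) < len N ?w \<longleftrightarrow> i \<in> rdes N ?g" if i: "1 \<le> i" "i \<le> N" for i
  proof -
    have s: "set (i # ws) \<subseteq> {1..N}" using i assms(1) by auto
    have "len N (sref i \<circ> ?w) = len N (word_prod (rev (i#ws)))"
      using len_rev_le[OF s] len_rev_le[of "rev (i#ws)" N] s by simp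
    also have "\<dots> = len N (?g \<circ> sref i)" by (simp add: wp_append)
    finally show ?thesis using lw i unfolding rdes_def by simp
  qed
  moreover have "wpT N ?g" using assms(1) unfolding wpT_def by (intro exI[of _ "rev ws"]) auto
  ultimately show ?thesis unfolding ldes_def using rdes_char[of N ?g] ge by auto
qed

definition rv :: "nat \<Rightarrow> nat \<Rightarrow> nat \<Rightarrow> nat" where
  "rv a c k = (if a \<le> k \<and> k \<le> c then a + c - k else k)"

lemma rv_rv[simp]: "rv a c (rv a c k) = k"
  by (auto simp: rv_def)

lemma inj_rv: "inj (rv a c)"
  by (rule injI) (metis rv_rv)

lemma supp_ok_rv: "supp_ok a b (rv a (Suc b))"
  unfolding supp_ok_def using inj_rv by (auto simp: rv_def)

definition Pr :: "nat \<Rightarrow> nat \<Rightarrow> (nat \<times> nat) set" where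
  "Pr a b = {(x,y). a \<le> x \<and> x < y \<and> y \<le> Suc b}"

lemma finite_Pr[simp]: "finite (Pr a b)"
  by (rule finite_subset[of _ "{..Suc b} \<times> {..Suc b}"]) (auto simp: Pr_def)

lemma invset_sub:
  assumes "supp_ok a b v"
  shows "invset N v \<subseteq> Pr a b"
proof
  fix p assume p: "p \<in> invset N v"
  obtain x y where xy: "p = (x,y)" by (cases p)
  have h: "x < y" "v y < v x" using p xy by (auto simp: invset_def)
  have fx: "(x < a \<or> Suc b < x \<longrightarrow> v x = x) \<and> (a \<le> x \<and> x \<le> Suc b \<longrightarrow> a \<le> v x \<and> v x \<le> Suc b)"
    using assms unfolding supp_ok_def by blast
  have fy: "(y < a \<or> Suc b < y \<longrightarrow> v y = y) \<and> (a \<le> y \<and> y \<le> Suc b \<longrightarrow> a \<le> v y \<and> v y \<le> Suc b)"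
    using assms unfolding supp_ok_def by blast
  have "a \<le> x \<and> y \<le> Suc b" using h fx fy by (cases "x < a"; cases "Suc b < y"; cases "y < a"; cases "Suc b < x") auto
  then show "p \<in> Pr a b" using xy h by (simp add: Pr_def)
qed

lemma invset_rv:
  assumes "b \<le> N"
  shows "invset N (rv a (Suc b)) = Pr a b"
proof
  show "invset N (rv a (Suc b)) \<subseteq> Pr a b" using invset_sub[OF supp_ok_rv] .
  show "Pr a b \<subseteq> invset N (rv a (Suc b))"
    using assms by (auto simp: Pr_def invset_def rv_def)
qed

lemma rv_unique:
  assumes "b \<le> N" "supp_ok a b v" "card (Pr a b) \<le> ninv N v"
  shows "v = rv a (Suc b)"
proof -
  have "invset N v = Pr a b"
    using invset_sub[OF assms(2)] assms(3) unfolding ninv_def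
    by (meson card_seteq finite_Pr)
  then have dec: "v (Suc i) < v i" if "a \<le> i" "i \<le> b" for i
    using that by (auto simp: Pr_def invset_def set_eq_iff)
  show ?thesis
  proof
    fix k
    show "v k = rv a (Suc b) k"
    proof (cases "a \<le> k \<and> k \<le> Suc b")
      case True
      have "v (k + (Suc b - k)) + (Suc b - k) \<le> v k" using True by (intro anti_step[of a b v, OF dec]) auto
      moreover have "v (a + (k - a)) + (k - a) \<le> v a" using True by (intro anti_step[of a b v, OF dec]) auto
      moreover have "a + (k - a) = k" "k + (Suc b - k) = Suc b" using True by auto
      moreover have "v a \<le> Suc b" "a \<le> v (Suc b)" using True assms(2) unfolding supp_ok_def by auto
      ultimately show ?thesis using True by (simp add: rv_def)
    next
      case False
      then show ?thesis using assms(2) unfolding supp_ok_def rv_def by auto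
    qed
  qed
qed

lemma parab_props:
  assumes "v \<in> parab {a..b}" "1 \<le> a" "b \<le> N"
  shows "supp_ok a b v" "wpT N v"
proof -
  obtain ws where ws: "set ws \<subseteq> {a..b}" "word_prod ws = v" using assms(1) unfolding parab_def by auto
  show "supp_ok a b v" using supp_ok_wp[OF ws(1)] ws(2) by simp
  show "wpT N v" unfolding wpT_def using ws assms(2,3) by (intro exI[of _ ws]) auto
qed

lemma longest_eq:
  assumes "1 \<le> a" "b \<le> N"
  shows "longest N {a..b} = rv a (Suc b)"
proof -
  let ?r = "rv a (Suc b)"
  obtain ws where ws: "set ws \<subseteq> {a..b}" "word_prod ws = ?r"
    using gen[OF assms(2) supp_ok_rv] by blast
  have rp: "?r \<in> parab {a..b}" unfolding parab_def using ws(1) ws(2)[symmetric] by blast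
  have lr: "len N ?r = card (Pr a b)"
    using len_eq[OF parab_props(2)[OF rp assms]] invset_rv[OF assms(2)] by (simp add: ninv_def)
  have lv: "len N v \<le> card (Pr a b)" if "v \<in> parab {a..b}" for v
    using len_eq[OF parab_props(2)[OF that assms]] invset_sub[OF parab_props(1)[OF that assms]]
    unfolding ninv_def by (simp add: card_mono)
  show ?thesis unfolding longest_def
  proof (rule some_equality)
    show "?r \<in> parab {a..b} \<and> (\<forall>v\<in>parab {a..b}. len N v \<le> len N ?r)" using rp lv lr by simp
  next
    fix w assume w: "w \<in> parab {a..b} \<and> (\<forall>v\<in>parab {a..b}. len N v \<le> len N w)"
    then have "card (Pr a b) \<le> ninv N w" using rp lr len_eq[OF parab_props(2)[OF _ assms]] by metis
    then show "w = ?r" using rv_unique[OF assms(2) parab_props(1)[OF _ assms]] w by blast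
  qed
qed

definition cyc :: "nat \<Rightarrow> nat \<Rightarrow> nat \<Rightarrow> nat" where
  "cyc a b = word_prod (rev [a..<Suc b])"

lemma cyc_apply: "cyc a b k = (if a \<le> k \<and> k \<le> Suc b then (if k = a then Suc b else k - 1) else k)"
proof (induction b arbitrary: k)
  case 0
  then show ?case by (cases a) (auto simp: cyc_def sref_apply)
next
  case (Suc b)
  show ?case
  proof (cases "a \<le> Suc b")
    case True
    then have "cyc a (Suc b) = sref (Suc b) \<circ> cyc a b" by (simp add: cyc_def)
    then show ?thesis using Suc.IH[of k] True by (auto simp: sref_apply)
  next
    case False
    then show ?thesis by (simp add: cyc_def)
  qed
qed

lemma hprod_interval: "hprod {a..b} = cyc a b"
proof -
  have "{a..b} = {a..<Suc b}" by auto
  then show ?thesis by (simp add: hprod_def cyc_def)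
qed

lemma hprod_split:
  assumes "finite Y"
  shows "hprod Y = hprod {y\<in>Y. t \<le> y} \<circ> hprod {y\<in>Y. y < t}"
proof -
  let ?L = "{y\<in>Y. y < t}" and ?U = "{y\<in>Y. t \<le> y}"
  have fin: "finite ?L" "finite ?U" using assms by auto
  have "sorted_list_of_set ?L @ sorted_list_of_set ?U = sorted_list_of_set Y"
  proof (rule sorted_distinct_set_unique)
    show "sorted (sorted_list_of_set ?L @ sorted_list_of_set ?U)"
      using fin by (auto simp: sorted_append)
    show "distinct (sorted_list_of_set ?L @ sorted_list_of_set ?U)"
      using fin by auto
    show "set (sorted_list_of_set ?L @ sorted_list_of_set ?U) = set (sorted_list_of_set Y)"
      using fin assms by auto
  qed auto
  then show ?thesis unfolding hprod_def by (metis rev_append wp_append)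
qed

lemma set_hprod_word: "finite Y \<Longrightarrow> set (rev (sorted_list_of_set Y)) = Y"
  by simp

lemma hprod_supp:
  assumes "finite Y" "Y \<subseteq> {a..b}"
  shows "(k < a \<or> Suc b < k \<longrightarrow> hprod Y k = k) \<and>
         (a \<le> k \<and> k \<le> Suc b \<longrightarrow> a \<le> hprod Y k \<and> hprod Y k \<le> Suc b)"
  unfolding hprod_def by (rule wp_support) (use assms in simp)

lemma hprod_single: "hprod {i} = sref i"
  by (simp add: hprod_def)

lemma hprod_char:
  assumes "Y \<subseteq> {1..N}" "1 \<le> i"
  shows "hprod Y (Suc i) = i \<longleftrightarrow> i \<in> Y"
proof -
  have fY: "finite Y" using assms(1) finite_subset by blast
  let ?A = "{y\<in>Y. y < i}" and ?B = "{y\<in>Y. i \<le> y}"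
  have fA: "finite ?A" "finite ?B" using fY by auto
  have "?A \<subseteq> {1..i - 1}" using assms by auto
  then have a: "hprod ?A (Suc i) = Suc i" using hprod_supp[OF fA(1), of 1 "i - 1" "Suc i"] assms(2) by simp
  have e: "hprod Y (Suc i) = hprod ?B (Suc i)" using hprod_split[OF fY, of i] a by simp
  show ?thesis
  proof (cases "i \<in> Y")
    case True
    let ?B1 = "{y\<in>?B. Suc i \<le> y}"
    have "{y\<in>?B. y < Suc i} = {i}" using True by auto
    then have "hprod ?B = hprod ?B1 \<circ> sref i" using hprod_split[OF fA(2), of "Suc i"] hprod_single by simp
    moreover have "?B1 \<subseteq> {Suc i..N}" using assms by auto
    then have "hprod ?B1 i = i" using hprod_supp[of ?B1 "Suc i" N i] fY by simp
    ultimately show ?thesis using e True by (simp add: sref_apply)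
  next
    case False
    then have "?B \<subseteq> {Suc i..N}" using assms False by (auto simp: subset_iff le_eq_less_or_eq)
    then have "Suc i \<le> hprod ?B (Suc i)" using hprod_supp[of ?B "Suc i" N "Suc i"] fA assms by auto
    then show ?thesis using e False by simp
  qed
qed

lemma hprod_inj:
  assumes "Y \<subseteq> {1..N}" "Y' \<subseteq> {1..N}" "hprod Y = hprod Y'"
  shows "Y = Y'"
proof -
  have "i \<in> Y \<longleftrightarrow> i \<in> Y'" for i
  proof (cases "1 \<le> i")
    case True
    then show ?thesis using hprod_char[OF assms(1) True] hprod_char[OF assms(2) True] assms(3) by simp
  next
    case False
    then show ?thesis using assms by auto
  qed
  then show ?thesis by blast
qed

lemma wpT_hprod: "X \<subseteq> {1..N} \<Longrightarrow> wpT N (hprod X)"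
proof -
  assume X: "X \<subseteq> {1..N}"
  then have "finite X" using finite_subset by blast
  then show ?thesis
    unfolding wpT_def hprod_def using X by (intro exI[of _ "rev (sorted_list_of_set X)"]) auto
qed

lemma wI_eq: "longest N {1..N-1} = rv 1 N"
proof (cases N)
  case 0
  then show ?thesis using longest_eq[of 1 0 0] by (auto simp: rv_def fun_eq_iff)
next
  case (Suc n)
  then show ?thesis using longest_eq[of 1 n N] by simp
qed

lemma wJ_eq: "longest N {2..N} = rv 2 (Suc N)"
  using longest_eq[of 2 N N] by simp

lemma wT_eq: "longest N {1..N} = rv 1 (Suc N)"
  using longest_eq[of 1 N N] by simp

lemma wpT_rv: "1 \<le> a \<Longrightarrow> b \<le> N \<Longrightarrow> wpT N (rv a (Suc b))"
proof -
  assume h: "1 \<le> a" "b \<le> N"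
  obtain ws where "set ws \<subseteq> {a..b}" "word_prod ws = rv a (Suc b)" using gen[OF h(2) supp_ok_rv] by blast
  moreover have "{a..b} \<subseteq> {1..N}" using h by auto
  ultimately show ?thesis unfolding wpT_def by blast
qed

lemma wpT_wI: "wpT N (rv 1 N)"
proof (cases N)
  case 0
  have "rv 1 0 = id" by (auto simp: rv_def fun_eq_iff)
  then show ?thesis using 0 unfolding wpT_def by (intro exI[of _ "[]"]) auto
next
  case (Suc n)
  then show ?thesis using wpT_rv[of 1 n N] by simp
qed

lemma ldes_char':
  assumes "wpT N w" "w \<circ> e = id"
  shows "ldes N w = {i \<in> {1..N}. e (Suc i) < e i}"
  using assms ldes_char unfolding wpT_def by blast

lemma sref_inj_eq: "sref j = sref j' \<Longrightarrow> j = j'"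
  by (drule fun_cong[of _ _ j]) (auto simp: sref_apply split: if_splits)

lemma inv_rv: "inv (rv a c) = rv a c"
  by (rule inv_unique_comp) (auto simp: fun_eq_iff)

lemma conj_rv:
  assumes x: "1 \<le> x" "x \<le> N"
  shows "rv 1 (Suc N) \<circ> sref x \<circ> rv 1 (Suc N) = sref (Suc N - x)"
proof
  fix k
  show "(rv 1 (Suc N) \<circ> sref x \<circ> rv 1 (Suc N)) k = sref (Suc N - x) k"
  proof (cases "1 \<le> k \<and> k \<le> Suc N")
    case False
    then have "rv 1 (Suc N) k = k" "sref x k = k" "sref (Suc N - x) k = k" using x
      by (auto simp: rv_def sref_apply)
    then show ?thesis by simp
  next
    case True
    then have r: "rv 1 (Suc N) k = Suc (Suc N) - k" by (simp add: rv_def)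
    consider "k = Suc N - x" | "k = Suc (Suc N - x)" | "k \<noteq> Suc N - x \<and> k \<noteq> Suc (Suc N - x)" by blast
    then show ?thesis
    proof cases
      case 1
      then have "Suc (Suc N) - k = Suc x" using x by simp
      moreover have "rv 1 (Suc N) x = Suc N + 1 - x" using x by (simp add: rv_def)
      ultimately show ?thesis using r 1 x by (simp add: sref_apply)
    next
      case 2
      then have "Suc (Suc N) - k = x" using x by simp
      moreover have "rv 1 (Suc N) (Suc x) = Suc N - x" using x by (simp add: rv_def)
      ultimately show ?thesis using r 2 x by (simp add: sref_apply)
    next
      case 3
      then have "Suc (Suc N) - k \<noteq> x" "Suc (Suc N) - k \<noteq> Suc x" using x True by auto
      moreover have "1 \<le> Suc (Suc N) - k" "Suc (Suc N) - k \<le> Suc N" using True by auto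
      ultimately show ?thesis using r 3 True by (simp add: sref_apply rv_def)
    qed
  qed
qed

lemma conj_eq:
  assumes "X \<subseteq> {1..N}"
  shows "conj_longest N X = {j \<in> {1..N}. \<exists>x\<in>X. j = Suc N - x}"
proof -
  have "sref j = longest N {1..N} \<circ> sref x \<circ> inv (longest N {1..N}) \<longleftrightarrow> j = Suc N - x"
    if "x \<in> X" for j x
  proof -
    have "longest N {1..N} \<circ> sref x \<circ> inv (longest N {1..N}) = sref (Suc N - x)"
      using that assms wT_eq inv_rv conj_rv by auto
    then show ?thesis using sref_inj_eq by metis
  qed
  then show ?thesis unfolding conj_longest_def by auto
qed

lemma ninv_cyc:
  assumes "\<And>k. 1 \<le> k \<Longrightarrow> k \<le> N \<Longrightarrow> u k < u (Suc N)"
  shows "m \<le> N \<Longrightarrow> ninv N (u \<circ> cyc (Suc N - m) N) = ninv N u + m"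
proof (induction m)
  case 0
  have "cyc (Suc N) N = id" by (simp add: cyc_def)
  then show ?case by simp
next
  case (Suc m)
  define a where "a = N - m"
  have a: "1 \<le> a" "a \<le> N" "Suc N - Suc m = a" "Suc N - m = Suc a" using Suc.prems by (auto simp: a_def)
  have "[a..<Suc N] = a # [Suc a..<Suc N]" using a by (simp add: upt_rec)
  then have c: "cyc a N = cyc (Suc a) N \<circ> sref a" by (simp add: cyc_def wp_append)
  let ?v = "u \<circ> cyc (Suc a) N"
  have "?v a < ?v (Suc a)" using assms[of a] a by (simp add: cyc_apply)
  then have "ninv N (?v \<circ> sref a) = Suc (ninv N ?v)" using ninv_up[of a N ?v] a by simp
  moreover have "ninv N ?v = ninv N u + m" using Suc.IH Suc.prems a(4) by (simp add: comp_def)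
  ultimately show ?case using a c by (simp add: comp_def)
qed

definition Wf :: "nat \<Rightarrow> nat \<Rightarrow> nat" where
  "Wf N k = (if k = 1 then N else if k = 2 then Suc N else if 3 \<le> k \<and> k \<le> Suc N then N + 2 - k else k)"
definition ef :: "nat \<Rightarrow> nat \<Rightarrow> nat" where
  "ef N v = (if v = N then 1 else if v = Suc N then 2 else if 1 \<le> v \<and> v < N then N + 2 - v else v)"

lemma fT1: "rv 1 N \<circ> cyc 1 N = rv 1 (Suc N)"
  by (auto simp: fun_eq_iff rv_def cyc_apply)

lemma fT2: "cyc 1 N \<circ> rv 2 (Suc N) = rv 1 (Suc N)"
  by (auto simp: fun_eq_iff rv_def cyc_apply)

lemma fJ1: "1 \<le> N \<Longrightarrow> rv 1 N \<circ> cyc 2 N = Wf N"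
  by (auto simp: fun_eq_iff rv_def cyc_apply Wf_def)

lemma fJ2: "1 \<le> N \<Longrightarrow> cyc 1 (N - 1) \<circ> rv 2 (Suc N) = Wf N"
  by (auto simp: fun_eq_iff rv_def cyc_apply Wf_def)

lemma fJ3: "1 \<le> N \<Longrightarrow> Wf N \<circ> ef N = id"
  by (auto simp: fun_eq_iff ef_def Wf_def)

lemma rdT: "{i \<in> {1..N}. rv 1 (Suc N) (Suc i) < rv 1 (Suc N) i} = {1..N}"
  by (auto simp: rv_def)

lemma rdJ: "1 \<le> N \<Longrightarrow> {i \<in> {1..N}. Wf N (Suc i) < Wf N i} = {2..N}"
  by (auto simp: Wf_def)

lemma ldJ: "1 \<le> N \<Longrightarrow> {i \<in> {1..N}. ef N (Suc i) < ef N i} = {1..N-1}"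
  by (auto simp: ef_def)

lemma Y_unique:
  assumes "Y \<subseteq> {1..N}" "Y0 \<subseteq> {1..N}" "hprod Y \<circ> rv 2 (Suc N) = hprod Y0 \<circ> rv 2 (Suc N)"
  shows "Y = Y0"
proof -
  have "hprod Y = hprod Y0"
  proof
    fix k
    have "hprod Y (rv 2 (Suc N) (rv 2 (Suc N) k)) = hprod Y0 (rv 2 (Suc N) (rv 2 (Suc N) k))"
      using fun_cong[OF assms(3), of "rv 2 (Suc N) k"] by simp
    then show "hprod Y k = hprod Y0 k" by simp
  qed
  then show ?thesis using hprod_inj assms(1,2) by blast
qed

lemma dir2:
  assumes X: "X \<subseteq> {1..N}" and sub: "{2..N} \<subseteq> rdes N (rv 1 N \<circ> hprod X)"
  shows "{2..N} \<subseteq> X"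
proof (rule ccontr)
  assume nsub: "\<not> {2..N} \<subseteq> X"
  have fX: "finite X" using X finite_subset by blast
  let ?S = "{j \<in> {2..N}. j \<notin> X}"
  have ne: "?S \<noteq> {}" using nsub by auto
  have fS: "finite ?S" by auto
  define j where "j = Max ?S"
  have j: "j \<in> ?S" using Max_in[OF fS ne] j_def by simp
  have jmax: "y \<le> j" if "y \<in> ?S" for y using Max_ge[OF fS that] j_def by simp
  have hi: "y \<in> X" if "j < y" "y \<le> N" for y
    using jmax[of y] that j by auto
  have B: "{y\<in>X. j \<le> y} = {Suc j..N}"
  proof
    show "{y\<in>X. j \<le> y} \<subseteq> {Suc j..N}"
    proof
      fix y assume "y \<in> {y\<in>X. j \<le> y}"
      then have y: "y \<in> X" "j \<le> y" by auto
      moreover have "y \<le> N" using X y by auto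
      moreover have "y \<noteq> j" using j y by auto
      ultimately show "y \<in> {Suc j..N}" by auto
    qed
    show "{Suc j..N} \<subseteq> {y\<in>X. j \<le> y}" using hi by auto
  qed
  have A: "{y\<in>X. y < j} \<subseteq> {1..j-1}" using X by auto
  have fA: "finite {y\<in>X. y < j}" using fX by auto
  have sp: "hprod X = cyc (Suc j) N \<circ> hprod {y\<in>X. y < j}"
    using hprod_split[OF fX, of j] B hprod_interval by simp
  have j2: "2 \<le> j" "j \<le> N" using j by auto
  have a1: "hprod {y\<in>X. y < j} (Suc j) = Suc j"
    using hprod_supp[OF fA A, of "Suc j"] j2 by simp
  have a2: "hprod {y\<in>X. y < j} j \<le> j"
    using hprod_supp[OF fA A, of j] j2 by simp
  have h1: "hprod X (Suc j) = Suc N" using sp a1 j2 by (simp add: cyc_apply)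
  have h2: "hprod X j \<le> j" using sp a2 by (simp add: cyc_apply)
  have w1: "(rv 1 N \<circ> hprod X) (Suc j) = Suc N" using h1 by (simp add: rv_def)
  have w2: "(rv 1 N \<circ> hprod X) j \<le> N" using h2 j2 by (auto simp: rv_def)
  have wT: "wpT N (rv 1 N \<circ> hprod X)" using wpT_comp[OF wpT_wI wpT_hprod[OF X]] .
  have "j \<in> rdes N (rv 1 N \<circ> hprod X)" using sub j2 by auto
  then show False using rdes_char[OF wT] w1 w2 by auto
qed

lemma len_split:
  assumes "m \<le> N"
  shows "len N (rv 1 N \<circ> cyc (Suc N - m) N) = len N (rv 1 N) + len N (cyc (Suc N - m) N)"
proof -
  have c: "wpT N (cyc (Suc N - m) N)"
  proof -
    have "{Suc N - m..N} \<subseteq> {1..N}" using assms by auto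
    then show ?thesis using wpT_hprod hprod_interval by metis
  qed
  have u1: "rv 1 N k < rv 1 N (Suc N)" if "1 \<le> k" "k \<le> N" for k using that by (simp add: rv_def)
  have u2: "id k < id (Suc N)" if "1 \<le> k" "k \<le> N" for k using that by simp
  have "ninv N (id :: nat \<Rightarrow> nat) = 0"
  proof -
    have "invset N (\<lambda>a. a) = {}" by (auto simp: invset_def)
    then show ?thesis by (simp add: ninv_def id_def)
  qed
  then have "ninv N (cyc (Suc N - m) N) = m" using ninv_cyc[of N id m, OF u2 assms] by simp
  moreover have "ninv N (rv 1 N \<circ> cyc (Suc N - m) N) = ninv N (rv 1 N) + m"
    using ninv_cyc[of N "rv 1 N" m, OF u1 assms] by simp
  ultimately show ?thesis
    using len_eq[OF wpT_wI] len_eq[OF c] len_eq[OF wpT_comp[OF wpT_wI c]] by simp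
qed

theorem lemma10p5:
  fixes N :: nat and X :: "nat set"
  assumes "X \<subseteq> {1..N}"
  shows "({2..N} \<subseteq> X \<longleftrightarrow> {2..N} \<subseteq> rdes N (longest N {1..N-1} \<circ> hprod X))
    \<and> ({2..N} \<subseteq> X \<longrightarrow>
        len N (longest N {1..N-1} \<circ> hprod X) = len N (longest N {1..N-1}) + len N (hprod X)
      \<and> (\<exists>!Y. Y \<subseteq> {1..N} \<and> longest N {1..N-1} \<circ> hprod X = hprod Y \<circ> longest N {2..N})
      \<and> (\<forall>Y. Y \<subseteq> {1..N} \<and> longest N {1..N-1} \<circ> hprod X = hprod Y \<circ> longest N {2..N}
            \<longrightarrow> Y = conj_longest N X \<and> ldes N (hprod Y \<circ> longest N {2..N}) = Y)
      \<and> rdes N (longest N {1..N-1} \<circ> hprod X) = X)"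
proof -
  let ?w = "rv 1 N \<circ> hprod X"
  have wT: "wpT N ?w" using wpT_comp[OF wpT_wI wpT_hprod[OF assms]] .
  have main: "{2..N} \<subseteq> rdes N ?w
      \<and> len N ?w = len N (rv 1 N) + len N (hprod X)
      \<and> (\<exists>!Y. Y \<subseteq> {1..N} \<and> ?w = hprod Y \<circ> rv 2 (Suc N))
      \<and> (\<forall>Y. Y \<subseteq> {1..N} \<and> ?w = hprod Y \<circ> rv 2 (Suc N)
            \<longrightarrow> Y = conj_longest N X \<and> ldes N (hprod Y \<circ> rv 2 (Suc N)) = Y)
      \<and> rdes N ?w = X" if i: "{2..N} \<subseteq> X"
  proof (cases "X = {1..N}")
    case True
    have hX: "hprod X = cyc 1 N" using True hprod_interval by simp
    have w: "?w = rv 1 (Suc N)" using hX fT1 by simp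
    have rd: "rdes N ?w = X" using rdes_char[OF wT] rdT[of N] True unfolding w by simp
    have ln: "len N ?w = len N (rv 1 N) + len N (hprod X)"
      using len_split[of N N] hX by simp
    have Y0: "?w = hprod {1..N} \<circ> rv 2 (Suc N)" using w fT2 hprod_interval by simp
    have cj: "conj_longest N X = {1..N}"
    proof -
      have "j \<in> {1..N} \<Longrightarrow> \<exists>x\<in>{1..N}. j = Suc N - x" for j
        by (rule bexI[of _ "Suc N - j"]) auto
      then show ?thesis using conj_eq[OF assms] True by auto
    qed
    have ld: "ldes N ?w = {1..N}"
      using ldes_char'[OF wT, of "rv 1 (Suc N)"] w rdT by (simp add: fun_eq_iff)
    have uq: "Y = {1..N}" if "Y \<subseteq> {1..N}" "?w = hprod Y \<circ> rv 2 (Suc N)" for Y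
      using Y_unique[OF that(1), of "{1..N}"] that Y0 by simp
    show ?thesis
    proof (intro conjI)
      show "{2..N} \<subseteq> rdes N ?w" using rd i by simp
      show "len N ?w = len N (rv 1 N) + len N (hprod X)" using ln .
      show "\<exists>!Y. Y \<subseteq> {1..N} \<and> ?w = hprod Y \<circ> rv 2 (Suc N)"
      proof (rule ex1I[of _ "{1..N}"])
        show "{1..N} \<subseteq> {1..N} \<and> ?w = hprod {1..N} \<circ> rv 2 (Suc N)" using Y0 by auto
        show "\<And>Y. Y \<subseteq> {1..N} \<and> ?w = hprod Y \<circ> rv 2 (Suc N) \<Longrightarrow> Y = {1..N}" using uq by blast
      qed
      show "\<forall>Y. Y \<subseteq> {1..N} \<and> ?w = hprod Y \<circ> rv 2 (Suc N)
            \<longrightarrow> Y = conj_longest N X \<and> ldes N (hprod Y \<circ> rv 2 (Suc N)) = Y"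
      proof (intro allI impI)
        fix Y assume h: "Y \<subseteq> {1..N} \<and> ?w = hprod Y \<circ> rv 2 (Suc N)"
        then have "Y = {1..N}" using uq by blast
        moreover have "ldes N (hprod Y \<circ> rv 2 (Suc N)) = ldes N ?w" using h by simp
        ultimately show "Y = conj_longest N X \<and> ldes N (hprod Y \<circ> rv 2 (Suc N)) = Y"
          using cj ld by simp
      qed
      show "rdes N ?w = X" using rd .
    qed
  next
    case False
    have n1: "1 \<le> N" using False assms by (cases N) auto
    have n1X: "1 \<notin> X"
    proof
      assume "1 \<in> X"
      then have "{1..N} \<subseteq> X" using i by (auto simp: subset_iff) (metis Suc_leI atLeastAtMost_iff le_neq_implies_less numeral_2_eq_2 one_add_one plus_1_eq_Suc)
      then show False using False assms by blast
    qed
    have X: "X = {2..N}"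
    proof
      show "X \<subseteq> {2..N}"
      proof
        fix x assume "x \<in> X"
        then have "1 \<le> x" "x \<le> N" "x \<noteq> 1" using assms n1X by auto
        then show "x \<in> {2..N}" by simp
      qed
      show "{2..N} \<subseteq> X" using i .
    qed
    have hX: "hprod X = cyc (Suc N - (N - 1)) N" using X hprod_interval n1 by simp
    have w: "?w = Wf N" using hX fJ1[OF n1] n1 by simp
    have rd: "rdes N ?w = X" using rdes_char[OF wT] rdJ[OF n1] X unfolding w by simp
    have ln: "len N ?w = len N (rv 1 N) + len N (hprod X)"
      using len_split[of "N - 1" N] hX by simp
    have Y0: "?w = hprod {1..N-1} \<circ> rv 2 (Suc N)" using w fJ2[OF n1] hprod_interval by simp
    have cj: "conj_longest N X = {1..N-1}"
    proof -
      have "j \<in> {1..N-1} \<Longrightarrow> \<exists>x\<in>{2..N}. j = Suc N - x" for j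
        by (rule bexI[of _ "Suc N - j"]) auto
      then show ?thesis using conj_eq[OF assms] X by auto
    qed
    have ld: "ldes N ?w = {1..N-1}"
      using ldes_char'[OF wT, of "ef N"] w fJ3[OF n1] ldJ[OF n1] by simp
    have sY: "{1..N-1} \<subseteq> {1..N}" by auto
    have uq: "Y = {1..N-1}" if "Y \<subseteq> {1..N}" "?w = hprod Y \<circ> rv 2 (Suc N)" for Y
      using Y_unique[OF that(1) sY] that Y0 by simp
    show ?thesis
    proof (intro conjI)
      show "{2..N} \<subseteq> rdes N ?w" using rd i by simp
      show "len N ?w = len N (rv 1 N) + len N (hprod X)" using ln .
      show "\<exists>!Y. Y \<subseteq> {1..N} \<and> ?w = hprod Y \<circ> rv 2 (Suc N)"
      proof (rule ex1I[of _ "{1..N-1}"])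
        show "{1..N-1} \<subseteq> {1..N} \<and> ?w = hprod {1..N-1} \<circ> rv 2 (Suc N)" using Y0 by auto
        show "\<And>Y. Y \<subseteq> {1..N} \<and> ?w = hprod Y \<circ> rv 2 (Suc N) \<Longrightarrow> Y = {1..N-1}" using uq by blast
      qed
      show "\<forall>Y. Y \<subseteq> {1..N} \<and> ?w = hprod Y \<circ> rv 2 (Suc N)
            \<longrightarrow> Y = conj_longest N X \<and> ldes N (hprod Y \<circ> rv 2 (Suc N)) = Y"
      proof (intro allI impI)
        fix Y assume h: "Y \<subseteq> {1..N} \<and> ?w = hprod Y \<circ> rv 2 (Suc N)"
        then have "Y = {1..N-1}" using uq by blast
        moreover have "ldes N (hprod Y \<circ> rv 2 (Suc N)) = ldes N ?w" using h by simp
        ultimately show "Y = conj_longest N X \<and> ldes N (hprod Y \<circ> rv 2 (Suc N)) = Y"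
          using cj ld by simp
      qed
      show "rdes N ?w = X" using rd .
    qed
  qed
  have eqv: "{2..N} \<subseteq> X \<longleftrightarrow> {2..N} \<subseteq> rdes N ?w"
    using main[THEN conjunct1] dir2[OF assms] by blast
  show ?thesis unfolding wI_eq wJ_eq
  proof (rule conjI)
    show "({2..N} \<subseteq> X) = ({2..N} \<subseteq> rdes N ?w)" by (rule eqv)
    show "{2..N} \<subseteq> X \<longrightarrow>
        len N ?w = len N (rv 1 N) + len N (hprod X)
      \<and> (\<exists>!Y. Y \<subseteq> {1..N} \<and> ?w = hprod Y \<circ> rv 2 (Suc N))
      \<and> (\<forall>Y. Y \<subseteq> {1..N} \<and> ?w = hprod Y \<circ> rv 2 (Suc N)
            \<longrightarrow> Y = conj_longest N X \<and> ldes N (hprod Y \<circ> rv 2 (Suc N)) = Y)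
      \<and> rdes N ?w = X"
    proof
      assume a: "{2..N} \<subseteq> X"
      show "len N ?w = len N (rv 1 N) + len N (hprod X)
      \<and> (\<exists>!Y. Y \<subseteq> {1..N} \<and> ?w = hprod Y \<circ> rv 2 (Suc N))
      \<and> (\<forall>Y. Y \<subseteq> {1..N} \<and> ?w = hprod Y \<circ> rv 2 (Suc N)
            \<longrightarrow> Y = conj_longest N X \<and> ldes N (hprod Y \<circ> rv 2 (Suc N)) = Y)
      \<and> rdes N ?w = X" using main[OF a] by (rule conjunct2)
    qed
  qed
qed

end
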